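(* Let $f:\mathbb{R}^n\to\mathbb{R}$ be continuously differentiable with $\nabla f$ Lipschitz continuous on $\mathbb{R}^n$, let $s$ be an integer with $0<s<n$, and let $\mathbf{x}^*$ be a CW-minimum of the problem (P): minimize $f(\mathbf{x})$ subject to $\|\mathbf{x}\|_0\le s$. Then $$|\nabla_i f(\mathbf{x}^* )|\ \begin{cases}\le L_2(f)\,M_s(\mathbf{x}^* ) & i\in I_0(\mathbf{x}^* ),\\ =0 & i\in I_1(\mathbf{x}^* ),\end{cases}$$ that is, $\mathbf{x}^*$ is an $L_2(f)$-stationary point of (P).
   Context: $\|\mathbf{x}\|_0$ is the number of nonzero components; $C_s=\{\mathbf{x}:\|\mathbf{x}\|_0\le s\}$; $I_1(\mathbf{x})=\{i:x_i\neq0\}$, $I_0(\mathbf{x})=\{i:x_i=0\}$; $M_s(\mathbf{x})$ is the $s$-th largest absolute value among the components of $\mathbf{x}$; $\mathbf{e}_i$ is the $i$-th standard basis vector. A feasible $\mathbf{x}^*$ is a coordinate-wise (CW) minimum of (P) if either $\|\mathbf{x}^*\|_0<s$ and $f(\mathbf{x}^* )=\min_{t}f(\mathbf{x}^*+t\mathbf{e}_i)$ for every $i$; or $\|\mathbf{x}^*\|_0=s$ and $f(\mathbf{x}^* )\le\min_{t}f(\mathbf{x}^*-x_i^*\mathbf{e}_i+t\mathbf{e}_j)$ for all $i\in I_1(\mathbf{x}^* )$, $j=1,\dots,n$. For $i\neq j$, $\nabla_{i,j}f(\mathbf{x})\in\mathbb{R}^2$ is the vector of the $i$-th and $j$-th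 partial derivatives, and $L_{i,j}(f)$ is a constant with $\|\nabla_{i,j}f(\mathbf{x})-\nabla_{i,j}f(\mathbf{x}+\mathbf{d})\|\le L_{i,j}(f)\|\mathbf{d}\|$ for all $\mathbf{x}\in\mathbb{R}^n$ and all $\mathbf{d}\in\mathbb{R}^n$ with at most two nonzero components (such constants exist since $\nabla f$ is Lipschitz); the local Lipschitz constant is $L_2(f)=\max_{i\neq j}L_{i,j}(f)$. For $L>0$, $\mathbf{x}^*\in C_s$ is $L$-stationary if $\mathbf{x}^*\in P_{C_s}(\mathbf{x}^*-\frac1L\nabla f(\mathbf{x}^* ))$, where $P_{C_s}(\mathbf{y})=\operatorname{argmin}_{\mathbf{x}\in C_s}\|\mathbf{x}-\mathbf{y}\|^2$; equivalently, the displayed condition with $L$ in place of $L_2(f)$. *)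

theory Defs
  imports "HOL-Analysis.Analysis" "HOL-Library.Multiset"
begin

text \<open>Vectors of R^n are modelled as real^'n, n = CARD('n).\<close>

definition l0norm :: "real^'n \<Rightarrow> nat" where
  "l0norm x = card {i. x $ i \<noteq> 0}"

definition Cs :: "nat \<Rightarrow> (real^'n) set" where
  "Cs s = {x. l0norm x \<le> s}"

definition I1 :: "real^'n \<Rightarrow> 'n set" where
  "I1 x = {i. x $ i \<noteq> 0}"

definition I0 :: "real^'n \<Rightarrow> 'n set" where
  "I0 x = {i. x $ i = 0}"

text \<open>M_s(x): the s-th largest absolute value among the components of x (s \<ge> 1).\<close>
definition Ms :: "nat \<Rightarrow> real^'n \<Rightarrow> real" where
  "Ms s x = rev (sorted_list_of_multiset (image_mset (\<lambda>i. \<bar>x $ i\<bar>) (mset_set UNIV))) ! (s - 1)"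

definition CW_min :: "(real^'n \<Rightarrow> real) \<Rightarrow> nat \<Rightarrow> real^'n \<Rightarrow> bool" where
  "CW_min f s x \<longleftrightarrow> x \<in> Cs s \<and>
     ((l0norm x < s \<and> (\<forall>i t. f x \<le> f (x + t *\<^sub>R axis i 1))) \<or>
      (l0norm x = s \<and> (\<forall>i \<in> I1 x. \<forall>j t. f x \<le> f (x - (x $ i) *\<^sub>R axis i 1 + t *\<^sub>R axis j 1))))"

definition Lij :: "(real^'n \<Rightarrow> real^'n) \<Rightarrow> 'n \<Rightarrow> 'n \<Rightarrow> real" where
  "Lij g i j = Inf {L. 0 \<le> L \<and> (\<forall>x d. l0norm d \<le> 2 \<longrightarrow>
      sqrt ((g x $ i - g (x + d) $ i)\<^sup>2 + (g x $ j - g (x + d) $ j)\<^sup>2) \<le> L * norm d)}"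

definition L2 :: "(real^'n \<Rightarrow> real^'n) \<Rightarrow> real" where
  "L2 g = Max {Lij g i j | i j. i \<noteq> j}"

end

theory Submission
  imports Defs
begin


lemma Ms_facts:
  fixes x :: "real^'n"
  assumes "0 < s" "s \<le> CARD('n)"
  defines "xs \<equiv> sorted_list_of_multiset (image_mset (\<lambda>i. \<bar>x $ i\<bar>) (mset_set (UNIV::'n set)))"
  shows "length xs = CARD('n)" "Ms s x = xs ! (CARD('n) - s)" "Ms s x \<in> (\<lambda>i. \<bar>x $ i\<bar>) ` UNIV"
    "sorted xs"
proof -
  show l: "length xs = CARD('n)" unfolding xs_def
    by (metis card_UNIV_def finite_UNIV mset_sorted_list_of_multiset size_image_mset size_mset size_mset_set)
  show "Ms s x = xs ! (CARD('n) - s)" unfolding Ms_def xs_def[symmetric]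
    using assms l by (simp add: rev_nth Suc_diff_le)
  moreover have "xs ! (CARD('n) - s) \<in> set xs" by (rule nth_mem) (use l assms(1) in simp)
  moreover have "set xs = (\<lambda>i. \<bar>x $ i\<bar>) ` UNIV" unfolding xs_def by simp
  ultimately show "Ms s x \<in> (\<lambda>i. \<bar>x $ i\<bar>) ` UNIV" by simp
  show "sorted xs" unfolding xs_def by simp
qed

lemma Ms_nonneg:
  fixes x :: "real^'n"
  assumes "0 < s" "s \<le> CARD('n)"
  shows "0 \<le> Ms s x"
  using Ms_facts(3)[OF assms, of x] by auto

lemma Ms_witness:
  fixes x :: "real^'n"
  assumes "0 < s" "s \<le> CARD('n)" "l0norm x = s"
  shows "\<exists>j. x $ j \<noteq> 0 \<and> \<bar>x $ j\<bar> \<le> Ms s x"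
proof -
  define xs where "xs \<equiv> sorted_list_of_multiset (image_mset (\<lambda>i. \<bar>x $ i\<bar>) (mset_set (UNIV::'n set)))"
  note F = Ms_facts[OF assms(1,2), of x, folded xs_def]
  obtain k where k: "Ms s x = \<bar>x $ k\<bar>" using F(3) by auto
  show ?thesis
  proof (cases "x $ k = 0")
    case False thus ?thesis using k by auto
  next
    case True
    hence M0: "xs ! (CARD('n) - s) = 0" using k F(2) by simp
    have "length (filter (\<lambda>v. 0 < v) xs) = size (filter_mset (\<lambda>v. 0 < v) (mset xs))"
      by (metis mset_filter size_mset)
    also have "\<dots> = size (image_mset (\<lambda>i. \<bar>x $ i\<bar>) (mset_set {i. 0 < \<bar>x $ i\<bar>}))"
      unfolding xs_def by (simp add: filter_mset_image_mset filter_mset_mset_set)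
    also have "\<dots> = card {i. x $ i \<noteq> 0}" by simp
    also have "\<dots> = s" using assms(3) unfolding l0norm_def by simp
    finally have cnt: "length (filter (\<lambda>v. 0 < v) xs) = s" .
    let ?m = "CARD('n) - s + 1"
    have "filter (\<lambda>v. 0 < v) (take ?m xs) = []"
    proof -
      have "\<forall>v\<in>set (take ?m xs). \<not> 0 < v"
      proof
        fix v assume "v \<in> set (take ?m xs)"
        then obtain p where p: "p < length (take ?m xs)" "v = take ?m xs ! p"
          by (metis in_set_conv_nth)
        hence "p \<le> CARD('n) - s" "v = xs ! p" by auto
        hence "v \<le> xs ! (CARD('n) - s)" using sorted_nth_mono[OF F(4)] F(1) assms by auto
        thus "\<not> 0 < v" using M0 by simp
      qed
      thus ?thesis by (simp add: filter_empty_conv)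
    qed
    hence "filter (\<lambda>v. 0 < v) xs = filter (\<lambda>v. 0 < v) (drop ?m xs)"
      by (metis append_take_drop_id filter_append self_append_conv2)
    hence "s \<le> length (drop ?m xs)" using cnt by (metis length_filter_le)
    hence "s \<le> s - 1" using F(1) assms by simp
    thus ?thesis using assms by simp
  qed
qed

lemma line_deriv:
  fixes f :: "real^'n \<Rightarrow> real"
  assumes grad: "\<And>y. (f has_derivative (\<lambda>h. g y \<bullet> h)) (at y)"
  shows "((\<lambda>\<tau>. f (x + \<tau> *\<^sub>R d)) has_real_derivative (g (x + \<tau> *\<^sub>R d) \<bullet> d)) (at \<tau>)"
proof -
  have "((\<lambda>\<tau>. x + \<tau> *\<^sub>R d) has_derivative (\<lambda>h. h *\<^sub>R d)) (at \<tau>)"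
    by (auto intro!: derivative_eq_intros)
  from has_derivative_compose[OF this grad]
  have "((\<lambda>\<tau>. f (x + \<tau> *\<^sub>R d)) has_derivative (\<lambda>h. g (x + \<tau> *\<^sub>R d) \<bullet> (h *\<^sub>R d))) (at \<tau>)"
    by (simp add: o_def)
  moreover have "(\<lambda>h. g (x + \<tau> *\<^sub>R d) \<bullet> (h *\<^sub>R d)) = (*) (g (x + \<tau> *\<^sub>R d) \<bullet> d)"
    by (auto simp: mult.commute)
  ultimately show ?thesis by (simp add: has_field_derivative_def)
qed

lemma coord_min:
  fixes f :: "real^'n \<Rightarrow> real"
  assumes grad: "\<And>y. (f has_derivative (\<lambda>h. g y \<bullet> h)) (at y)"
    and m: "\<And>t. f x \<le> f (x + t *\<^sub>R axis i 1)"
  shows "g x $ i = 0"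
proof -
  have "((\<lambda>\<tau>. f (x + \<tau> *\<^sub>R axis i 1)) has_real_derivative (g (x + 0 *\<^sub>R axis i 1) \<bullet> axis i 1)) (at 0)"
    by (rule line_deriv[OF grad])
  hence D: "((\<lambda>\<tau>. f (x + \<tau> *\<^sub>R axis i 1)) has_real_derivative (g x $ i)) (at 0)"
    by (simp add: inner_axis)
  show ?thesis
    by (rule DERIV_local_min[OF D, of 1]) (use m in auto)
qed

lemma sq_le_norm:
  fixes v :: "real^'n"
  assumes "i \<noteq> j"
  shows "(v $ i)\<^sup>2 + (v $ j)\<^sup>2 \<le> (norm v)\<^sup>2"
proof -
  have "(v $ i)\<^sup>2 + (v $ j)\<^sup>2 = (\<Sum>k\<in>{i,j}. (v $ k)\<^sup>2)" using assms by simp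
  also have "\<dots> \<le> (\<Sum>k\<in>UNIV. (v $ k)\<^sup>2)" by (rule sum_mono2) auto
  also have "\<dots> = v \<bullet> v" by (simp add: inner_vec_def power2_eq_square)
  also have "\<dots> = (norm v)\<^sup>2" by (simp add: power2_norm_eq_inner)
  finally show ?thesis .
qed

lemma Lset_nonempty:
  fixes g :: "real^'n \<Rightarrow> real^'n"
  assumes lip: "\<And>y z. norm (g y - g z) \<le> K * norm (y - z)" and ij: "i \<noteq> j"
  shows "max K 0 \<in> {L. 0 \<le> L \<and> (\<forall>x d. l0norm d \<le> 2 \<longrightarrow>
      sqrt ((g x $ i - g (x + d) $ i)\<^sup>2 + (g x $ j - g (x + d) $ j)\<^sup>2) \<le> L * norm d)}"
proof -
  { fix x d :: "real^'n"
    have "sqrt ((g x $ i - g (x + d) $ i)\<^sup>2 + (g x $ j - g (x + d) $ j)\<^sup>2) \<le> sqrt ((norm (g x - g (x+d)))\<^sup>2)"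
      using sq_le_norm[OF ij, of "g x - g (x+d)"] by (intro real_sqrt_le_mono) simp
    also have "\<dots> = norm (g x - g (x + d))" by simp
    also have "\<dots> \<le> K * norm (x - (x + d))" by (rule lip)
    also have "\<dots> \<le> max K 0 * norm d" by (simp add: mult_right_mono)
    finally have "sqrt ((g x $ i - g (x + d) $ i)\<^sup>2 + (g x $ j - g (x + d) $ j)\<^sup>2) \<le> max K 0 * norm d" . }
  note * = this
  show ?thesis
  proof (rule CollectI, rule conjI)
    show "0 \<le> max K 0" by simp
    show "\<forall>x d. l0norm d \<le> 2 \<longrightarrow>
      sqrt ((g x $ i - g (x + d) $ i)\<^sup>2 + (g x $ j - g (x + d) $ j)\<^sup>2) \<le> max K 0 * norm d"
      using * by blast
  qed
qed

lemma Lij_nonneg: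
  fixes g :: "real^'n \<Rightarrow> real^'n"
  assumes lip: "\<And>y z. norm (g y - g z) \<le> K * norm (y - z)" and ij: "i \<noteq> j"
  shows "0 \<le> Lij g i j"
  unfolding Lij_def
  apply (rule cInf_greatest)
   apply (insert Lset_nonempty[OF lip ij], blast)
  apply auto
  done

lemma cs2: "t * a - c * b \<le> sqrt (a\<^sup>2 + b\<^sup>2) * sqrt (t\<^sup>2 + c\<^sup>2)" for t a c b :: real
proof -
  have "(t * a - c * b)\<^sup>2 \<le> (a\<^sup>2 + b\<^sup>2) * (t\<^sup>2 + c\<^sup>2)"
  proof -
    have "(a\<^sup>2 + b\<^sup>2) * (t\<^sup>2 + c\<^sup>2) = (t * a - c * b)\<^sup>2 + (t*b + c*a)\<^sup>2"
      by (simp add: power2_eq_square algebra_simps)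
    thus ?thesis by simp
  qed
  hence "sqrt ((t * a - c * b)\<^sup>2) \<le> sqrt ((a\<^sup>2 + b\<^sup>2) * (t\<^sup>2 + c\<^sup>2))" by (rule real_sqrt_le_mono)
  thus ?thesis by (simp add: real_sqrt_mult)
qed

lemma descent:
  fixes f :: "real^'n \<Rightarrow> real" and t c :: real
  assumes grad: "\<And>y. (f has_derivative (\<lambda>h. g y \<bullet> h)) (at y)"
    and ij: "i \<noteq> j" and L0: "0 \<le> L"
    and LP: "\<forall>x d. l0norm d \<le> 2 \<longrightarrow>
      sqrt ((g x $ i - g (x + d) $ i)\<^sup>2 + (g x $ j - g (x + d) $ j)\<^sup>2) \<le> L * norm d"
  shows "f (x + (t *\<^sub>R axis i 1 - c *\<^sub>R axis j 1)) \<le> f x + (t * g x $ i - c * g x $ j) + L/2 * (t\<^sup>2 + c\<^sup>2)"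
proof -
  define d where "d = t *\<^sub>R axis i (1::real) - c *\<^sub>R axis j 1"
  have gd: "v \<bullet> d = t * v $ i - c * v $ j" for v :: "real^'n"
    by (simp add: d_def inner_diff_right inner_axis)
  have "d \<bullet> d = t\<^sup>2 + c\<^sup>2"
    using ij by (simp add: d_def inner_diff_left inner_diff_right inner_axis_axis power2_eq_square)
  hence nd2: "(norm d)\<^sup>2 = t\<^sup>2 + c\<^sup>2" by (simp add: power2_norm_eq_inner)
  hence nd: "norm d = sqrt (t\<^sup>2 + c\<^sup>2)" by (metis norm_ge_zero real_sqrt_unique)
  define \<phi> where "\<phi> \<tau> = f (x + \<tau> *\<^sub>R d) - \<tau> * (g x \<bullet> d) - L/2 * \<tau>\<^sup>2 * (t\<^sup>2 + c\<^sup>2)" for \<tau>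
  have "\<phi> 1 \<le> \<phi> 0"
  proof (rule DERIV_nonpos_imp_nonincreasing[of 0 1])
    fix \<tau> :: real assume \<tau>: "0 \<le> \<tau>" "\<tau> \<le> 1"
    have D: "(\<phi> has_real_derivative (g (x + \<tau> *\<^sub>R d) \<bullet> d - g x \<bullet> d - L * \<tau> * (t\<^sup>2 + c\<^sup>2))) (at \<tau>)"
      unfolding \<phi>_def
      by (rule line_deriv[OF grad] derivative_eq_intros refl | simp add: power2_eq_square)+
    have supp: "{k. (\<tau> *\<^sub>R d) $ k \<noteq> 0} \<subseteq> {i, j}"
      by (auto simp: d_def axis_def split: if_splits)
    have "l0norm (\<tau> *\<^sub>R d) \<le> 2"
    proof -
      have "l0norm (\<tau> *\<^sub>R d) \<le> card {i,j}" unfolding l0norm_def by (rule card_mono[OF _ supp]) simp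
      also have "\<dots> \<le> 2" by (simp add: card_insert_if)
      finally show ?thesis .
    qed
    with LP have B0: "sqrt ((g x $ i - g (x + \<tau> *\<^sub>R d) $ i)\<^sup>2 + (g x $ j - g (x + \<tau> *\<^sub>R d) $ j)\<^sup>2) \<le> L * norm (\<tau> *\<^sub>R d)"
      by blast
    have "norm (\<tau> *\<^sub>R d) = \<tau> * norm d" using \<tau> by simp
    with B0 have B: "sqrt ((g x $ i - g (x + \<tau> *\<^sub>R d) $ i)\<^sup>2 + (g x $ j - g (x + \<tau> *\<^sub>R d) $ j)\<^sup>2) \<le> L * (\<tau> * norm d)"
      by (simp only:)
    define a where "a = g (x + \<tau> *\<^sub>R d) $ i - g x $ i"
    define b where "b = g (x + \<tau> *\<^sub>R d) $ j - g x $ j"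
    have "g (x + \<tau> *\<^sub>R d) \<bullet> d - g x \<bullet> d = t * a - c * b"
      unfolding gd a_def b_def by (simp add: algebra_simps)
    also have "\<dots> \<le> sqrt (a\<^sup>2 + b\<^sup>2) * sqrt (t\<^sup>2 + c\<^sup>2)" by (rule cs2)
    also have "\<dots> \<le> L * (\<tau> * norm d) * sqrt (t\<^sup>2 + c\<^sup>2)"
    proof (rule mult_right_mono)
      have "a\<^sup>2 = (g x $ i - g (x + \<tau> *\<^sub>R d) $ i)\<^sup>2" "b\<^sup>2 = (g x $ j - g (x + \<tau> *\<^sub>R d) $ j)\<^sup>2"
        unfolding a_def b_def by (simp_all add: power2_commute)
      thus "sqrt (a\<^sup>2 + b\<^sup>2) \<le> L * (\<tau> * norm d)" using B by simp
    qed simp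
    also have "\<dots> = L * \<tau> * (t\<^sup>2 + c\<^sup>2)" unfolding nd
      by (simp add: mult.assoc[symmetric])
    finally have "g (x + \<tau> *\<^sub>R d) \<bullet> d - g x \<bullet> d - L * \<tau> * (t\<^sup>2 + c\<^sup>2) \<le> 0" by simp
    with D show "\<exists>y. (\<phi> has_real_derivative y) (at \<tau>) \<and> y \<le> 0" by blast
  qed simp
  thus ?thesis unfolding \<phi>_def d_def[symmetric] using gd[of "g x"] by simp
qed

lemma quad_bound:
  fixes a c L :: real
  assumes L0: "0 \<le> L" and H: "\<And>t. 0 \<le> t * a + L/2 * (t\<^sup>2 + c\<^sup>2)"
  shows "\<bar>a\<bar> \<le> L * \<bar>c\<bar>"
proof (cases "L = 0")
  case True
  with H[of "-a"] have "a\<^sup>2 \<le> 0" by (simp add: power2_eq_square)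
  hence "a = 0" by simp
  thus ?thesis using True by simp
next
  case False
  hence Lp: "0 < L" using L0 by simp
  have "0 \<le> (-a/L) * a + L/2 * ((-a/L)\<^sup>2 + c\<^sup>2)" by (rule H)
  hence "0 \<le> L * ((-a/L) * a + L/2 * ((-a/L)\<^sup>2 + c\<^sup>2))" using Lp by simp
  also have "\<dots> = (L\<^sup>2 * c\<^sup>2 - a\<^sup>2) / 2" using Lp by (simp add: field_simps power2_eq_square)
  finally have "a\<^sup>2 \<le> (L * \<bar>c\<bar>)\<^sup>2" by (simp add: power_mult_distrib)
  thus ?thesis by (rule power2_le_imp_le[of "\<bar>a\<bar>", simplified]) (use L0 in simp)
qed

theorem theorem2p4:
  fixes f :: "real^'n \<Rightarrow> real" and g :: "real^'n \<Rightarrow> real^'n"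
    and s :: nat and x :: "real^'n" and K :: real
  assumes grad: "\<And>y. (f has_derivative (\<lambda>h. g y \<bullet> h)) (at y)"
    and cont: "continuous_on UNIV g"
    and lip: "\<And>y z. norm (g y - g z) \<le> K * norm (y - z)"
    and s_pos: "0 < s" and s_lt: "s < CARD('n)"
    and cw: "CW_min f s x"
  shows "\<forall>i. (i \<in> I0 x \<longrightarrow> \<bar>g x $ i\<bar> \<le> L2 g * Ms s x) \<and>
             (i \<in> I1 x \<longrightarrow> g x $ i = 0)"
proof -
  have fin: "finite {Lij g i j |i j. i \<noteq> j}"
  proof -
    have "{Lij g i j |i j. i \<noteq> j} \<subseteq> (\<lambda>(i,j). Lij g i j) ` UNIV" by auto
    thus ?thesis by (rule finite_subset) simp
  qed
  have Lij_le: "Lij g i j \<le> L2 g" if "i \<noteq> j" for i j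
    unfolding L2_def by (rule Max_ge[OF fin]) (use that in auto)
  have "2 \<le> CARD('n)" using s_pos s_lt by simp
  then obtain i0 j0 :: 'n where ij0: "i0 \<noteq> j0"
    by (metis (full_types) card_2_iff' card_le_Suc_iff numeral_2_eq_2 UNIV_I ex_in_conv)
  have L2_nn: "0 \<le> L2 g" using Lij_nonneg[OF lip ij0] Lij_le[OF ij0] by linarith
  have Ms_nn: "0 \<le> Ms s x" using Ms_nonneg[OF s_pos, of x] s_lt by simp
  from cw have cases: "(l0norm x < s \<and> (\<forall>i t. f x \<le> f (x + t *\<^sub>R axis i 1))) \<or>
      (l0norm x = s \<and> (\<forall>i \<in> I1 x. \<forall>j t. f x \<le> f (x - (x $ i) *\<^sub>R axis i 1 + t *\<^sub>R axis j 1)))"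
    unfolding CW_min_def by blast
  show ?thesis
  proof (cases "l0norm x < s")
    case True
    with cases have "\<forall>i t. f x \<le> f (x + t *\<^sub>R axis i 1)" by auto
    hence z: "g x $ i = 0" for i using coord_min[OF grad] by blast
    show ?thesis using z L2_nn Ms_nn by simp
  next
    case False
    with cases have eq: "l0norm x = s"
      and m: "\<And>i j t. i \<in> I1 x \<Longrightarrow> f x \<le> f (x - (x $ i) *\<^sub>R axis i 1 + t *\<^sub>R axis j 1)" by auto
    have z1: "g x $ i = 0" if "i \<in> I1 x" for i
    proof (rule coord_min[OF grad])
      fix u
      have "x + u *\<^sub>R axis i 1 = x - (x $ i) *\<^sub>R axis i 1 + (u + x $ i) *\<^sub>R axis i 1"
        by (simp add: algebra_simps scaleR_add_left)
      thus "f x \<le> f (x + u *\<^sub>R axis i 1)" using m[OF that, where j=i and t="u + x $ i"] by (simp only:)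
    qed
    have z0: "\<bar>g x $ i\<bar> \<le> L2 g * Ms s x" if "i \<in> I0 x" for i
    proof -
      obtain j where j: "x $ j \<noteq> 0" "\<bar>x $ j\<bar> \<le> Ms s x"
        using Ms_witness[OF s_pos _ eq] s_lt by auto
      have jI: "j \<in> I1 x" using j by (simp add: I1_def)
      have xi: "x $ i = 0" using that by (simp add: I0_def)
      hence ij: "i \<noteq> j" using j by auto
      have gj: "g x $ j = 0" by (rule z1[OF jI])
      define S where "S = {L. 0 \<le> L \<and> (\<forall>x d. l0norm d \<le> 2 \<longrightarrow>
      sqrt ((g x $ i - g (x + d) $ i)\<^sup>2 + (g x $ j - g (x + d) $ j)\<^sup>2) \<le> L * norm d)}"
      have aj: "0 < \<bar>x $ j\<bar>" using j by simp
      have "\<bar>g x $ i\<bar> / \<bar>x $ j\<bar> \<le> Lij g i j"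
        unfolding Lij_def S_def[symmetric]
      proof (rule cInf_greatest)
        show "S \<noteq> {}" using Lset_nonempty[OF lip ij] unfolding S_def by blast
        fix L assume "L \<in> S"
        hence L0: "0 \<le> L" and LP: "\<forall>x d. l0norm d \<le> 2 \<longrightarrow>
      sqrt ((g x $ i - g (x + d) $ i)\<^sup>2 + (g x $ j - g (x + d) $ j)\<^sup>2) \<le> L * norm d"
          unfolding S_def by auto
        have "\<bar>g x $ i\<bar> \<le> L * \<bar>x $ j\<bar>"
        proof (rule quad_bound[OF L0])
          fix t
          have "x + (t *\<^sub>R axis i 1 - x $ j *\<^sub>R axis j 1) = x - (x $ j) *\<^sub>R axis j 1 + t *\<^sub>R axis i 1"
            by (simp add: algebra_simps)
          hence "f x \<le> f (x + (t *\<^sub>R axis i 1 - x $ j *\<^sub>R axis j 1))" using m[OF jI, where j=i and t=t] by (simp only:)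
          also have "\<dots> \<le> f x + (t * g x $ i - x $ j * g x $ j) + L/2 * (t\<^sup>2 + (x $ j)\<^sup>2)"
            by (rule descent[OF grad ij L0 LP])
          finally show "0 \<le> t * g x $ i + L/2 * (t\<^sup>2 + (x $ j)\<^sup>2)" using gj by simp
        qed
        thus "\<bar>g x $ i\<bar> / \<bar>x $ j\<bar> \<le> L" using aj by (simp add: divide_le_eq)
      qed
      hence "\<bar>g x $ i\<bar> \<le> Lij g i j * \<bar>x $ j\<bar>" using aj by (simp add: divide_le_eq)
      also have "\<dots> \<le> L2 g * Ms s x"
        by (rule mult_mono[OF Lij_le[OF ij] j(2) L2_nn]) simp
      finally show ?thesis .
    qed
    show ?thesis using z0 z1 by blast
  qed
qed

end
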